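(* Let $N_q\ge 1$ and let $\{s_{t,j}\}$, $1\le t\le N_q$, $1\le j\le n$, be real numbers. For each $j$ define $a_j := \max_{1\le t\le N_q} s_{t,j}$ and $g_j := \log\sum_{t=1}^{N_q}\exp(s_{t,j})$. Let $a_{(1)}\ge a_{(2)}\ge \dots \ge a_{(n)}$ be the values $\{a_j\}$ sorted in non-increasing order, and let $1\le K<n$. If $a_{(K)} - a_{(K+1)} > \log N_q$, then the set of $K$ indices $j$ with the largest values of $a_j$ is identical to the set of $K$ indices $j$ with the largest values of $g_j$.
   Context: In the paper's setting, $s_{t,j}$ is the cosine similarity between query-token hidden state $h_t$ and visual token embedding $v_j$; $a_j$ is the max-similarity pruning score and $g_j$ the log-sum-exp (smooth attention-style pooling) score of visual token $j$. *)

theory Defs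
  imports Complex_Main
begin

definition max_score :: "nat \<Rightarrow> (nat \<Rightarrow> nat \<Rightarrow> real) \<Rightarrow> nat \<Rightarrow> real" where
  "max_score Nq s j = Max ((\<lambda>t. s t j) ` {1..Nq})"

definition lse_score :: "nat \<Rightarrow> (nat \<Rightarrow> nat \<Rightarrow> real) \<Rightarrow> nat \<Rightarrow> real" where
  "lse_score Nq s j = ln (\<Sum>t=1..Nq. exp (s t j))"

text \<open>k-th largest value (1-based) of f over the indices 1..n: f_(k).\<close>
definition order_stat :: "(nat \<Rightarrow> real) \<Rightarrow> nat \<Rightarrow> nat \<Rightarrow> real" where
  "order_stat f n k = rev (sort (map f [1..<n+1])) ! (k - 1)"

definition is_topK :: "(nat \<Rightarrow> real) \<Rightarrow> nat \<Rightarrow> nat \<Rightarrow> nat set \<Rightarrow> bool" where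
  "is_topK f n K T \<longleftrightarrow> T \<subseteq> {1..n} \<and> card T = K \<and>
     (\<forall>i\<in>T. \<forall>j\<in>{1..n} - T. f j \<le> f i)"

end

theory Submission
  imports Defs "HOL-Library.Multiset"
begin

lemma topK_unique:
  fixes f :: "nat \<Rightarrow> real"
  assumes T0: "T0 \<subseteq> {1..n}" "card T0 = K"
    and sep: "\<And>i j. i \<in> T0 \<Longrightarrow> j \<in> {1..n} - T0 \<Longrightarrow> f j < f i"
  shows "is_topK f n K T \<longleftrightarrow> T = T0"
proof
  assume h: "is_topK f n K T"
  show "T = T0"
  proof (rule ccontr)
    assume ne: "T \<noteq> T0"
    have fin: "finite T" "finite T0" using h T0 unfolding is_topK_def
      by (auto intro: finite_subset)
    have "\<not> T0 \<subseteq> T"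
      using ne fin h T0 unfolding is_topK_def by (metis card_subset_eq)
    then obtain i where i: "i \<in> T0" "i \<notin> T" by auto
    have "\<not> T \<subseteq> T0"
      using ne fin h T0 unfolding is_topK_def by (metis card_subset_eq)
    then obtain j where j: "j \<in> T" "j \<notin> T0" by auto
    have "f i \<le> f j" using h i j T0 unfolding is_topK_def by auto
    moreover have "f j < f i" using sep[of i j] i j h unfolding is_topK_def by auto
    ultimately show False by simp
  qed
next
  assume "T = T0"
  then show "is_topK f n K T" using T0 sep unfolding is_topK_def by (auto intro: less_imp_le)
qed

lemma a_le_g:
  assumes "Nq \<ge> 1"
  shows "max_score Nq s j \<le> lse_score Nq s j \<and> lse_score Nq s j \<le> max_score Nq s j + ln (real Nq)"
proof -
  let ?A = "(\<lambda>t. s t j) ` {1..Nq}"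
  have ne: "?A \<noteq> {}" using assms by auto
  have "Max ?A \<in> ?A" using ne by (intro Max_in) auto
  then obtain t0 where t0: "t0 \<in> {1..Nq}" "Max ?A = s t0 j" by auto
  have le: "\<And>t. t \<in> {1..Nq} \<Longrightarrow> s t j \<le> Max ?A" by (intro Max_ge) auto
  have pos: "0 < (\<Sum>t=1..Nq. exp (s t j))" using assms by (intro sum_pos) auto
  have "exp (s t0 j) \<le> (\<Sum>t=1..Nq. exp (s t j))"
    using t0 by (intro member_le_sum) auto
  hence low: "s t0 j \<le> ln (\<Sum>t=1..Nq. exp (s t j))"
    using pos by (simp add: ln_ge_iff)
  have "(\<Sum>t=1..Nq. exp (s t j)) \<le> (\<Sum>t=1..Nq. exp (Max ?A))"
    using le by (intro sum_mono) auto
  hence "(\<Sum>t=1..Nq. exp (s t j)) \<le> real Nq * exp (Max ?A)" by simp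
  hence up0: "ln (\<Sum>t=1..Nq. exp (s t j)) \<le> ln (real Nq * exp (Max ?A))"
    using pos by (subst ln_le_cancel_iff) auto
  have eq: "ln (real Nq * exp (Max ?A)) = ln (real Nq) + Max ?A" using assms by (simp add: ln_mult)
  have up: "ln (\<Sum>t=1..Nq. exp (s t j)) \<le> ln (real Nq) + Max ?A" using up0 eq by simp
  show ?thesis using t0 up low unfolding max_score_def lse_score_def
    by (simp add: add.commute)
qed

lemma order_stat_split:
  fixes f :: "nat \<Rightarrow> real"
  assumes "1 \<le> K" "K < n" "order_stat f n (K+1) < order_stat f n K"
  shows "card {j\<in>{1..n}. f j \<ge> order_stat f n K} = K"
    and "\<And>j. j \<in> {1..n} \<Longrightarrow> f j < order_stat f n K \<Longrightarrow> f j \<le> order_stat f n (K+1)"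
proof -
  define l where "l = map f [1..<n+1]"
  define xs where "xs = rev (sort l)"
  define L where "L = order_stat f n K"
  define R where "R = order_stat f n (K+1)"
  have LR_lt: "R < L" using assms(3) unfolding L_def R_def .
  have len: "length xs = n" by (simp add: xs_def l_def)
  have sd: "sorted_wrt (\<ge>) xs" unfolding xs_def by (simp add: sorted_wrt_rev)
  have L: "xs ! (K-1) = L" and R: "xs ! K = R"
    unfolding L_def R_def order_stat_def xs_def l_def by auto
  have big: "\<And>i. i < K \<Longrightarrow> xs ! i \<ge> L"
  proof -
    fix i assume "i < K"
    then show "xs ! i \<ge> L" using sd len assms L
      by (cases "i = K - 1") (auto simp: sorted_wrt_iff_nth_less)
  qed
  have small: "\<And>i. K \<le> i \<Longrightarrow> i < n \<Longrightarrow> xs ! i \<le> R"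
  proof -
    fix i assume "K \<le> i" "i < n"
    then show "xs ! i \<le> R" using sd len assms R
      by (cases "i = K") (auto simp: sorted_wrt_iff_nth_less)
  qed
  have "length (filter (\<lambda>x. L \<le> x) (take K xs)) = K"
    using big len assms by (subst filter_True) (auto simp: in_set_conv_nth)
  moreover have "filter (\<lambda>x. L \<le> x) (drop K xs) = []"
  proof -
    have "\<And>x. x \<in> set (drop K xs) \<Longrightarrow> x < L"
    proof -
      fix x assume "x \<in> set (drop K xs)"
      then obtain i where "i < n - K" "x = xs ! (K + i)" using len by (auto simp: in_set_conv_nth)
      then have "K + i < n" "K \<le> K + i" by auto
      then show "x < L" using small[of "K+i"] \<open>x = _\<close> LR_lt by fastforce
    qed
    then show ?thesis by (force simp: filter_empty_conv)
  qed
  ultimately have cntxs: "length (filter (\<lambda>x. L \<le> x) xs) = K"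
    by (metis append_take_drop_id filter_append length_append list.size(3) add_0_right)
  have "mset xs = mset l" by (simp add: xs_def)
  hence "length (filter (\<lambda>x. L \<le> x) l) = K"
    using cntxs by (metis mset_filter size_mset)
  hence "length (filter (\<lambda>j. L \<le> f j) [1..<n+1]) = K"
    by (simp only: l_def filter_map length_map comp_def)
  moreover have "set (filter (\<lambda>j. L \<le> f j) [1..<n+1]) = {j\<in>{1..n}. f j \<ge> L}" by auto
  ultimately show "card {j\<in>{1..n}. f j \<ge> order_stat f n K} = K"
    unfolding L_def[symmetric]
    by (metis distinct_card distinct_filter distinct_upt)
  fix j assume j: "j \<in> {1..n}" "f j < order_stat f n K"
  have "j \<in> set [1..<n+1]" using j by auto
  hence "f j \<in> set l" unfolding l_def set_map by (rule imageI)
  hence "f j \<in> set xs" by (simp add: xs_def)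
  then obtain i where i: "i < n" "xs ! i = f j" using len by (auto simp: in_set_conv_nth)
  show "f j \<le> order_stat f n (K+1)"
  proof (cases "i < K")
    case True then show ?thesis using big[of i] i j L_def by auto
  next
    case False then show ?thesis using small[of i] i R_def by auto
  qed
qed

theorem corollaryA2:
  fixes s :: "nat \<Rightarrow> nat \<Rightarrow> real" and Nq n K :: nat
  assumes "Nq \<ge> 1" and "1 \<le> K" and "K < n"
    and "order_stat (max_score Nq s) n K - order_stat (max_score Nq s) n (K + 1) > ln (real Nq)"
  shows "(\<exists>!T. is_topK (max_score Nq s) n K T) \<and>
         (\<exists>!T. is_topK (lse_score Nq s) n K T) \<and>
         (\<forall>T. is_topK (max_score Nq s) n K T \<longleftrightarrow> is_topK (lse_score Nq s) n K T)"
proof -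
  let ?a = "max_score Nq s" and ?g = "lse_score Nq s"
  define L where "L = order_stat ?a n K"
  define R where "R = order_stat ?a n (K+1)"
  have lnpos: "ln (real Nq) \<ge> 0" using assms(1) by simp
  have LR: "R < L" using assms(4) lnpos unfolding L_def R_def by linarith
  define T0 where "T0 = {j\<in>{1..n}. ?a j \<ge> L}"
  have card: "card T0 = K" using order_stat_split(1)[OF assms(2,3)] LR
    unfolding T0_def L_def R_def by simp
  have sub: "T0 \<subseteq> {1..n}" unfolding T0_def by auto
  have out: "\<And>j. j \<in> {1..n} - T0 \<Longrightarrow> ?a j \<le> R"
    using order_stat_split(2)[OF assms(2,3)] LR unfolding T0_def L_def R_def by force
  have sepa: "\<And>i j. i \<in> T0 \<Longrightarrow> j \<in> {1..n} - T0 \<Longrightarrow> ?a j < ?a i"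
    using out LR unfolding T0_def by fastforce
  have sepg: "\<And>i j. i \<in> T0 \<Longrightarrow> j \<in> {1..n} - T0 \<Longrightarrow> ?g j < ?g i"
  proof -
    fix i j assume i: "i \<in> T0" and j: "j \<in> {1..n} - T0"
    have "?g j \<le> ?a j + ln (real Nq)" using a_le_g[OF assms(1)] by blast
    also have "\<dots> \<le> R + ln (real Nq)" using out[OF j] by simp
    also have "\<dots> < L" using assms(4) unfolding L_def R_def by simp
    also have "\<dots> \<le> ?a i" using i unfolding T0_def by simp
    also have "\<dots> \<le> ?g i" using a_le_g[OF assms(1)] by blast
    finally show "?g j < ?g i" .
  qed
  note A = topK_unique[OF sub card sepa] and G = topK_unique[OF sub card sepg]
  show ?thesis using A G by auto
qed

end
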